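(* Fix integers $2\le k\le n'\le n$, $M=\lceil n/n'\rceil$, $r=n-(M-1)n'$, and consider the $n'$-grouped $(k,n)$ random-grid sharing of a secret bit $s$ described in the context. Let $\vec\lambda=(\lambda_1,\ldots,\lambda_M)$ be a valid partition and suppose $\lambda_j$ share bits (shadow images) are selected from group $j$ for each $j$. For $s\in\{0,1\}$ let $t_s$ be the probability that the logical OR of the selected share bits equals $0$ when the secret bit is $s$. Then $$t_0=\frac{\Pr(\#C(\vec\lambda)=k)}{2^{k-1}}+\sum_{g=1}^{k-1}\frac{\Pr(\#C(\vec\lambda)=g)}{2^g},\qquad t_1=\sum_{g=1}^{k-1}\frac{\Pr(\#C(\vec\lambda)=g)}{2^g},$$ and the contrast of the recovered image is $$\alpha=\frac{t_0-t_1}{1+t_1}=\frac{\Pr(\#C(\vec\lambda)=k)/2^{k-1}}{1+\sum_{g=1}^{k-1}\Pr(\#C(\vec\lambda)=g)/2^g}.$$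
   Context: Basic bits: for a secret bit $s\in\{0,1\}$, $b_1,\ldots,b_{k-1}$ are independent uniform bits and $b_k=s\oplus b_1\oplus\cdots\oplus b_{k-1}$. There is a fixed sequence $c=(c_1,\ldots,c_{n'})\in\{1,\ldots,k\}^{n'}$ in which every value $1,\ldots,k$ occurs. The $n$ share bits are arranged in $M$ groups: groups $1,\ldots,M-1$ have $n'$ positions and group $M$ has $r$ positions. For each group $j$, an independent uniformly random permutation $\sigma_j$ of $\{1,\ldots,n'\}$ is drawn (independent of the $b_i$), and the $\delta$-th position of group $j$ carries the index $c_{\sigma_j(\delta)}$ and the bit $b_{c_{\sigma_j(\delta)}}$ ($\delta\le r$ for group $M$). Position $\delta$ of group $j$ is the share bit of shadow image $(j-1)n'+\delta$; the scheme is applied independently to every pixel, and stacking shadow images computes the OR of their bits (0 = transparent, 1 = opaque). A valid partition is a vector $\vec\lambda=(\lambda_1,\ldots,\lambda_M)$ of non-negative integers with $\max_j\lambda_j\le n'$ and $\lambda_M\le r$. $C(\vec\lambda)$ is the multiset of indices carried by the selected positions (fixed positions, $\lambda_j$ of them in group $j$) and $\#C(\vec\lambda)$ is the number of its distinct elements; probabilities are over all the randomness. The contrast of a recovered image is defined as $(t_0-t_1)/(1+t_1)$, where $t_s$ is the light transmission (probability of a $0$ pixel) of recovered pixels whose secret pixel is $s$. *)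

theory Defs
  imports "HOL-Probability.Probability" "HOL-Combinatorics.Permutations"
begin

text \<open>Bits are booleans (True = 1 = opaque, False = 0 = transparent).
  The basic bits are b_1..b_{k-1} (free, uniform) and
  b_k = s xor b_1 xor ... xor b_{k-1}.\<close>

definition basic_bit :: "nat \<Rightarrow> bool \<Rightarrow> (nat \<Rightarrow> bool) \<Rightarrow> nat \<Rightarrow> bool" where
  "basic_bit k s b i = (if i < k then b i else (s \<noteq> odd (card {j \<in> {1..<k}. b j})))"

definition rg_space :: "nat \<Rightarrow> nat \<Rightarrow> nat \<Rightarrow> ((nat \<Rightarrow> bool) \<times> (nat \<Rightarrow> nat \<Rightarrow> nat)) pmf" where
  "rg_space k n' M =
     pmf_of_set (({1..<k} \<rightarrow>\<^sub>E (UNIV :: bool set)) \<times> ({1..M} \<rightarrow>\<^sub>E {p. p permutes {1..n'}}))"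

text \<open>Number of distinct indices carried by the selected positions S j of the groups j = 1..M
  (position delta of group j carries index c (sigma_j delta)).\<close>

definition numC :: "(nat \<Rightarrow> nat) \<Rightarrow> nat \<Rightarrow> (nat \<Rightarrow> nat set) \<Rightarrow> (nat \<Rightarrow> nat \<Rightarrow> nat) \<Rightarrow> nat" where
  "numC c M S \<sigma> = card {c (\<sigma> j \<delta>) | j \<delta>. j \<in> {1..M} \<and> \<delta> \<in> S j}"

definition stack_zero ::
  "nat \<Rightarrow> (nat \<Rightarrow> nat) \<Rightarrow> nat \<Rightarrow> (nat \<Rightarrow> nat set) \<Rightarrow> bool \<Rightarrow> (nat \<Rightarrow> bool) \<times> (nat \<Rightarrow> nat \<Rightarrow> nat) \<Rightarrow> bool" where
  "stack_zero k c M S s \<omega> =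
     (\<forall>j\<in>{1..M}. \<forall>\<delta>\<in>S j. \<not> basic_bit k s (fst \<omega>) (c (snd \<omega> j \<delta>)))"

definition contrast :: "real \<Rightarrow> real \<Rightarrow> real" where
  "contrast t0 t1 = (t0 - t1) / (1 + t1)"

end

theory Submission
  imports Defs
begin


lemma flip_parity:
  fixes b :: "nat \<Rightarrow> bool" and I :: "nat set"
  assumes "finite I" "e \<in> I"
  shows "odd (card {j\<in>I. (b(e := \<not> b e)) j}) = (\<not> odd (card {j\<in>I. b j}))"
proof (cases "b e")
  case True
  have eq: "{j\<in>I. (b(e := \<not> b e)) j} = {j\<in>I. b j} - {e}" using True by auto
  have "e \<in> {j\<in>I. b j}" using True assms by auto
  moreover have "finite {j\<in>I. b j}" using assms by auto
  ultimately have "card {j\<in>I. b j} = Suc (card ({j\<in>I. b j} - {e}))"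
    by (metis card_Suc_Diff1)
  then show ?thesis unfolding eq by simp
next
  case False
  have eq: "{j\<in>I. (b(e := \<not> b e)) j} = insert e {j\<in>I. b j}" using False assms by auto
  have "e \<notin> {j\<in>I. b j}" using False by auto
  moreover have "finite {j\<in>I. b j}" using assms by auto
  ultimately show ?thesis unfolding eq by simp
qed

lemma card_X:
  fixes k :: nat and D :: "nat set"
  assumes "D \<subseteq> {1..<k}"
  shows "card {b \<in> {1..<k} \<rightarrow>\<^sub>E (UNIV::bool set). \<forall>i\<in>D. \<not> b i} = 2 ^ card ({1..<k} - D)"
proof -
  have "{b \<in> {1..<k} \<rightarrow>\<^sub>E (UNIV::bool set). \<forall>i\<in>D. \<not> b i}
     = PiE {1..<k} (\<lambda>i. if i \<in> D then {False} else UNIV)"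
    using assms by (intro set_eqI) (auto simp: PiE_iff extensional_def split: if_splits)
  moreover have "card (PiE {1..<k} (\<lambda>i. if i \<in> D then {False} else (UNIV::bool set)))
     = (\<Prod>i\<in>{1..<k}. if i \<in> D then 1 else 2)"
    by (subst card_PiE) (auto intro!: prod.cong)
  moreover have "(\<Prod>i\<in>{1..<k}. if i \<in> D then 1 else (2::nat)) = 2 ^ card ({1..<k} - D)"
    by (subst prod.If_cases) (auto simp: Diff_eq)
  ultimately show ?thesis by simp
qed

lemma count_lt:
  fixes k :: nat and C :: "nat set" and s :: bool
  assumes "C \<subseteq> {1..k}" "card C < k"
  shows "card {b \<in> {1..<k} \<rightarrow>\<^sub>E (UNIV::bool set). \<forall>i\<in>C. \<not> basic_bit k s b i} * 2 ^ card C = 2 ^ (k - 1)"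
proof -
  define D where "D = C \<inter> {1..<k}"
  define X where "X = {b \<in> {1..<k} \<rightarrow>\<^sub>E (UNIV::bool set). \<forall>i\<in>D. \<not> b i}"
  have finC: "finite C" using assms(1) finite_subset by blast
  have cX: "card X = 2 ^ card ({1..<k} - D)" unfolding X_def by (rule card_X) (auto simp: D_def)
  have cD: "card ({1..<k} - D) = k - 1 - card D"
    by (simp add: D_def card_Diff_subset)
  show ?thesis
  proof (cases "k \<in> C")
    case False
    have Ck: "x \<in> C \<Longrightarrow> x \<in> {1..<k}" for x using False assms(1)
      by (metis atLeastAtMost_iff atLeastLessThan_iff subsetD le_neq_implies_less)
    then have DC: "D = C" unfolding D_def by blast
    have "{b \<in> {1..<k} \<rightarrow>\<^sub>E (UNIV::bool set). \<forall>i\<in>C. \<not> basic_bit k s b i} = X"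
      unfolding X_def DC using Ck by (auto simp: basic_bit_def)
    moreover have "card C \<le> k - 1" using assms by simp
    ultimately show ?thesis using cX cD DC by (simp add: power_add[symmetric])
  next
    case True
    have CD: "C = insert k D" using True assms(1) by (auto simp: D_def)
    have kD: "k \<notin> D" by (simp add: D_def)
    have finD: "finite D" by (simp add: D_def)
    have cC: "card C = Suc (card D)" using CD kD finD by simp
    define p where "p b = odd (card {j\<in>{1..<k}. b j})" for b :: "nat \<Rightarrow> bool"
    have eqset: "{b \<in> {1..<k} \<rightarrow>\<^sub>E (UNIV::bool set). \<forall>i\<in>C. \<not> basic_bit k s b i} = {b\<in>X. p b = s}"
      unfolding X_def CD p_def by (auto simp: basic_bit_def D_def)
    have "card D < k - 1" using cC assms by simp
    then have "card ({1..<k} - D) > 0" using cD by simp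
    then have "{1..<k} - D \<noteq> {}" by (metis card.empty less_irrefl)
    then obtain e where "e \<in> {1..<k} - D" by blast
    then have e: "e \<in> {1..<k}" "e \<notin> D" by auto
    define \<phi> where "\<phi> b = b(e := \<not> b e)" for b :: "nat \<Rightarrow> bool"
    have pf: "p (\<phi> b) = (\<not> p b)" for b
      unfolding p_def \<phi>_def by (rule flip_parity) (use e in auto)
    have \<phi>X: "b \<in> X \<Longrightarrow> \<phi> b \<in> X" for b
      using e unfolding X_def \<phi>_def by (auto simp: PiE_iff extensional_def)
    have \<phi>\<phi>: "\<phi> (\<phi> b) = b" for b unfolding \<phi>_def by auto
    have "bij_betw \<phi> {b\<in>X. p b} {b\<in>X. \<not> p b}"
      by (rule bij_betw_byWitness[where f' = \<phi>]) (auto simp: \<phi>\<phi> pf \<phi>X)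
    then have ceq: "card {b\<in>X. p b} = card {b\<in>X. \<not> p b}" by (rule bij_betw_same_card)
    have "finite ({1..<k} \<rightarrow>\<^sub>E (UNIV::bool set))" by (intro finite_PiE) auto
    then have finX: "finite X" unfolding X_def by (rule finite_subset[rotated]) auto
    have "card X = card {b\<in>X. p b} + card {b\<in>X. \<not> p b}"
      using finX by (subst card_Un_disjoint[symmetric]) (auto intro: arg_cong[where f=card])
    then have half: "card X = 2 * card {b\<in>X. p b = s}" using ceq by (cases s) auto
    have "2 * (card {b\<in>X. p b = s} * 2 ^ card C) = 2 * 2 ^ (k - 1)"
    proof -
      have "2 * (card {b\<in>X. p b = s} * 2 ^ card C) = card X * 2 ^ card C" using half by simp
      also have "\<dots> = 2 ^ (k - 1 - card D + card C)" using cX cD by (simp add: power_add)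
      also have "k - 1 - card D + card C = Suc (k - 1)" using cC assms by simp
      finally show ?thesis by simp
    qed
    then show ?thesis using eqset by simp
  qed
qed

lemma count_eq:
  fixes k :: nat and C :: "nat set" and s :: bool
  assumes "C \<subseteq> {1..k}" "card C = k" "1 \<le> k"
  shows "card {b \<in> {1..<k} \<rightarrow>\<^sub>E (UNIV::bool set). \<forall>i\<in>C. \<not> basic_bit k s b i} = (if s then 0 else 1)"
proof -
  have C: "C = {1..k}" using assms by (metis card_atLeastAtMost card_subset_eq diff_Suc_1 finite_atLeastAtMost)
  define X where "X = {b \<in> {1..<k} \<rightarrow>\<^sub>E (UNIV::bool set). \<forall>i\<in>{1..<k}. \<not> b i}"
  have cX: "card X = 1" unfolding X_def by (subst card_X) auto
  have z: "b \<in> X \<Longrightarrow> {j\<in>{1..<k}. b j} = {}" for b unfolding X_def by auto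
  have "{b \<in> {1..<k} \<rightarrow>\<^sub>E (UNIV::bool set). \<forall>i\<in>C. \<not> basic_bit k s b i}
       = (if s then {} else X)"
  proof (cases s)
    case True
    have "\<not> (\<forall>i\<in>{1..k}. \<not> basic_bit k s b i)" if "b \<in> {1..<k} \<rightarrow>\<^sub>E (UNIV::bool set)" for b
    proof
      assume a: "\<forall>i\<in>{1..k}. \<not> basic_bit k s b i"
      have "\<not> b i" if "i \<in> {1..<k}" for i
        using a[rule_format, of i] that by (simp add: basic_bit_def)
      then have "b \<in> X" using that unfolding X_def by blast
      then have c0: "card {j \<in> {1..<k}. b j} = 0" by (simp only: z[OF \<open>b \<in> X\<close>] card.empty)
      then have "basic_bit k s b k" using True unfolding basic_bit_def c0 by simp
      moreover have "k \<in> {1..k}" using assms(3) by simp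
      ultimately show False using a by blast
    qed
    then show ?thesis unfolding C using True by auto
  next
    case False
    have "(\<forall>i\<in>{1..k}. \<not> basic_bit k s b i) = (b \<in> X)" if "b \<in> {1..<k} \<rightarrow>\<^sub>E (UNIV::bool set)" for b
    proof
      assume a: "\<forall>i\<in>{1..k}. \<not> basic_bit k s b i"
      have "\<not> b i" if "i \<in> {1..<k}" for i
        using a[rule_format, of i] that by (simp add: basic_bit_def)
      then show "b \<in> X" using that unfolding X_def by blast
    next
      assume b: "b \<in> X"
      have "\<not> basic_bit k s b i" if "i \<in> {1..k}" for i
      proof (cases "i < k")
        case True then show ?thesis using b that unfolding X_def by (simp add: basic_bit_def)
      next
        case False
        have c0: "card {j \<in> {1..<k}. b j} = 0" by (simp only: z[OF b] card.empty)
        show ?thesis using False \<open>\<not> s\<close> unfolding basic_bit_def c0 by simp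
      qed
      then show "\<forall>i\<in>{1..k}. \<not> basic_bit k s b i" by blast
    qed
    then show ?thesis unfolding C using False by (auto simp: X_def)
  qed
  then show ?thesis using cX by simp
qed


lemma ball_Cs: "(\<forall>i\<in>{c (\<sigma> j \<delta>) | j \<delta>. j \<in> J \<and> \<delta> \<in> S j}. P i) = (\<forall>j\<in>J. \<forall>\<delta>\<in>S j. P (c (\<sigma> j \<delta>)))"
  by blast

theorem theorem1:
  fixes k n' n M r :: nat and c :: "nat \<Rightarrow> nat" and lam :: "nat \<Rightarrow> nat"
    and S :: "nat \<Rightarrow> nat set" and t :: "bool \<Rightarrow> real" and P :: "nat \<Rightarrow> real"
  assumes "2 \<le> k" and "k \<le> n'" and "n' \<le> n"
    and "M = nat \<lceil>real n / real n'\<rceil>" and "r = n - (M - 1) * n'"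
    and "c ` {1..n'} = {1..k}"
    and "\<forall>j\<in>{1..M}. lam j \<le> n'" and "lam M \<le> r"
    and "\<forall>j\<in>{1..M}. S j \<subseteq> {1..n'} \<and> card (S j) = lam j" and "S M \<subseteq> {1..r}"
    and "(\<Sum>j=1..M. lam j) \<ge> 1"
    and "\<And>s. t s = measure_pmf.prob (rg_space k n' M) {\<omega>. stack_zero k c M S s \<omega>}"
    and "\<And>g. P g = measure_pmf.prob (rg_space k n' M) {\<omega>. numC c M S (snd \<omega>) = g}"
  shows "t False = P k / 2 ^ (k - 1) + (\<Sum>g=1..k-1. P g / 2 ^ g)
       \<and> t True = (\<Sum>g=1..k-1. P g / 2 ^ g)
       \<and> contrast (t False) (t True) = (P k / 2 ^ (k - 1)) / (1 + (\<Sum>g=1..k-1. P g / 2 ^ g))"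
proof -
  define A where "A = ({1..<k} \<rightarrow>\<^sub>E (UNIV :: bool set))"
  define B where "B = ({1..M} \<rightarrow>\<^sub>E {p. p permutes {1..n'}})"
  have rg: "rg_space k n' M = pmf_of_set (A \<times> B)" unfolding rg_space_def A_def B_def ..
  have finA: "finite A" unfolding A_def by (auto intro: finite_PiE)
  have finB: "finite B" unfolding B_def by (auto intro!: finite_PiE finite_permutations)
  have neA: "A \<noteq> {}" unfolding A_def by (simp add: PiE_eq_empty_iff)
  have "id \<in> {p. p permutes {1..n'}}" using permutes_id by blast
  then have neB: "B \<noteq> {}" unfolding B_def PiE_eq_empty_iff by blast
  have finAB: "finite (A \<times> B)" using finA finB by simp
  have neAB: "A \<times> B \<noteq> {}" using neA neB by simp
  have cApos: "card A > 0" using finA neA by (simp add: card_gt_0_iff)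
  have cBpos: "card B > 0" using finB neB by (simp add: card_gt_0_iff)
  define Cs where "Cs \<sigma> = {c (\<sigma> j \<delta>) | j \<delta>. j \<in> {1..M} \<and> \<delta> \<in> S j}" for \<sigma> :: "nat \<Rightarrow> nat \<Rightarrow> nat"
  have numC_eq: "numC c M S \<sigma> = card (Cs \<sigma>)" for \<sigma> unfolding numC_def Cs_def ..
  have Cs_sub: "Cs \<sigma> \<subseteq> {1..k}" if \<sigma>: "\<sigma> \<in> B" for \<sigma>
  proof
    fix x assume "x \<in> Cs \<sigma>"
    then obtain j \<delta> where x: "x = c (\<sigma> j \<delta>)" "j \<in> {1..M}" "\<delta> \<in> S j" unfolding Cs_def by blast
    have perm: "\<sigma> j permutes {1..n'}" using \<sigma> x(2) unfolding B_def by auto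
    have "S j \<subseteq> {1..n'}" using assms(9) x(2) by blast
    then have "\<delta> \<in> {1..n'}" using x(3) by blast
    then have "\<sigma> j \<delta> \<in> {1..n'}" using permutes_in_image[OF perm] by simp
    then show "x \<in> {1..k}" using assms(6) x(1) by blast
  qed
  have "\<exists>j\<in>{1..M}. lam j \<noteq> 0"
  proof (rule ccontr)
    assume "\<not> (\<exists>j\<in>{1..M}. lam j \<noteq> 0)"
    then have "(\<Sum>j=1..M. lam j) = 0" by simp
    then show False using assms(11) by simp
  qed
  then obtain j0 where j0: "j0 \<in> {1..M}" "lam j0 \<noteq> 0" by blast
  have "card (S j0) = lam j0" using assms(9) j0(1) by blast
  then have "S j0 \<noteq> {}" using j0(2) by auto
  then obtain \<delta>0 where \<delta>0: "\<delta>0 \<in> S j0" by blast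
  have Cs_ne: "Cs \<sigma> \<noteq> {}" for \<sigma> using j0(1) \<delta>0 unfolding Cs_def by blast
  have card_pos: "1 \<le> card (Cs \<sigma>)" if "\<sigma> \<in> B" for \<sigma>
  proof -
    have "finite (Cs \<sigma>)" using finite_subset[OF Cs_sub[OF that]] by simp
    then have "card (Cs \<sigma>) > 0" using Cs_ne[of \<sigma>] by (simp add: card_gt_0_iff)
    then show ?thesis by simp
  qed
  have card_le: "card (Cs \<sigma>) \<le> k" if "\<sigma> \<in> B" for \<sigma>
  proof -
    have "card (Cs \<sigma>) \<le> card {1..k}" by (rule card_mono[OF finite_atLeastAtMost Cs_sub[OF that]])
    then show ?thesis by simp
  qed
  define f where "f s g = (if g < k then 1 / 2^g else if s then 0 else 1 / 2^(k-1) :: real)" for s :: bool and g :: nat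
  have key: "real (card {b\<in>A. stack_zero k c M S s (b,\<sigma>)}) = 2^(k-1) * f s (card (Cs \<sigma>))"
    if \<sigma>: "\<sigma> \<in> B" for \<sigma> s
  proof -
    have sz: "stack_zero k c M S s (b,\<sigma>) = (\<forall>i\<in>Cs \<sigma>. \<not> basic_bit k s b i)" for b
      unfolding stack_zero_def Cs_def ball_Cs by (simp only: fst_conv snd_conv)
    have eq: "{b\<in>A. stack_zero k c M S s (b,\<sigma>)} = {b \<in> {1..<k} \<rightarrow>\<^sub>E (UNIV::bool set). \<forall>i\<in>Cs \<sigma>. \<not> basic_bit k s b i}"
      unfolding sz A_def ..
    show ?thesis
    proof (cases "card (Cs \<sigma>) < k")
      case True
      have "card {b\<in>A. stack_zero k c M S s (b,\<sigma>)} * 2 ^ card (Cs \<sigma>) = 2 ^ (k - 1)"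
        unfolding eq by (rule count_lt[OF Cs_sub[OF \<sigma>] True])
      then have "real (card {b\<in>A. stack_zero k c M S s (b,\<sigma>)} * 2 ^ card (Cs \<sigma>)) = real ((2::nat) ^ (k - 1))"
        by (simp only:)
      then have "real (card {b\<in>A. stack_zero k c M S s (b,\<sigma>)}) * 2 ^ card (Cs \<sigma>) = 2 ^ (k - 1)"
        by (simp only: of_nat_mult of_nat_power of_nat_numeral)
      then show ?thesis using True unfolding f_def by (simp add: field_simps)
    next
      case False
      then have k: "card (Cs \<sigma>) = k" using card_le[OF \<sigma>] by simp
      have k1: "1 \<le> k" using assms(1) by simp
      show ?thesis unfolding eq count_eq[OF Cs_sub[OF \<sigma>] k k1] f_def using k by simp
    qed
  qed
  have tform: "t s = (\<Sum>\<sigma>\<in>B. f s (card (Cs \<sigma>))) / card B" for s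
  proof -
    let ?E = "{\<omega>. stack_zero k c M S s \<omega>}"
    have "t s = card ((A \<times> B) \<inter> ?E) / card (A \<times> B)"
      using assms(12)[of s] unfolding rg by (simp add: measure_pmf_of_set[OF neAB finAB])
    moreover have "(A \<times> B) \<inter> ?E = (\<lambda>(x,y). (y,x)) ` (SIGMA \<sigma>:B. {b\<in>A. stack_zero k c M S s (b,\<sigma>)})"
    proof (intro equalityI subsetI)
      fix \<omega> assume "\<omega> \<in> (A \<times> B) \<inter> ?E"
      then obtain b \<sigma> where \<omega>: "\<omega> = (b,\<sigma>)" "b \<in> A" "\<sigma> \<in> B" "stack_zero k c M S s (b,\<sigma>)" by auto
      show "\<omega> \<in> (\<lambda>(x,y). (y,x)) ` (SIGMA \<sigma>:B. {b\<in>A. stack_zero k c M S s (b,\<sigma>)})"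
        by (rule image_eqI[where x="(\<sigma>,b)"]) (use \<omega> in auto)
    next
      fix \<omega> assume "\<omega> \<in> (\<lambda>(x,y). (y,x)) ` (SIGMA \<sigma>:B. {b\<in>A. stack_zero k c M S s (b,\<sigma>)})"
      then show "\<omega> \<in> (A \<times> B) \<inter> ?E" by auto
    qed
    moreover have "card ((\<lambda>(x,y). (y,x)) ` (SIGMA \<sigma>:B. {b\<in>A. stack_zero k c M S s (b,\<sigma>)}))
        = (\<Sum>\<sigma>\<in>B. card {b\<in>A. stack_zero k c M S s (b,\<sigma>)})"
      using finA finB by (subst card_image[OF swap_inj_on]) simp
    moreover have "real (\<Sum>\<sigma>\<in>B. card {b\<in>A. stack_zero k c M S s (b,\<sigma>)})
        = 2^(k-1) * (\<Sum>\<sigma>\<in>B. f s (card (Cs \<sigma>)))"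
      by (simp add: key sum_distrib_left)
    moreover have "card A = 2^(k-1)" unfolding A_def by (subst card_PiE) auto
    ultimately show ?thesis using cApos by (simp add: card_cartesian_product)
  qed
  have Pform: "P g = card {\<sigma>\<in>B. card (Cs \<sigma>) = g} / card B" for g
  proof -
    have "P g = card ((A \<times> B) \<inter> {\<omega>. numC c M S (snd \<omega>) = g}) / card (A \<times> B)"
      using assms(13)[of g] unfolding rg by (simp add: measure_pmf_of_set[OF neAB finAB])
    moreover have "(A \<times> B) \<inter> {\<omega>. numC c M S (snd \<omega>) = g} = A \<times> {\<sigma>\<in>B. card (Cs \<sigma>) = g}"
      by (auto simp: numC_eq)
    ultimately show ?thesis using cApos by (simp add: card_cartesian_product)
  qed
  have grp: "(\<Sum>\<sigma>\<in>B. f s (card (Cs \<sigma>))) = (\<Sum>g\<in>{1..k}. f s g * card {\<sigma>\<in>B. card (Cs \<sigma>) = g})" for s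
  proof -
    have "(\<Sum>\<sigma>\<in>B. f s (card (Cs \<sigma>))) = (\<Sum>g\<in>{1..k}. \<Sum>\<sigma>\<in>{x. x \<in> B \<and> card (Cs x) = g}. f s (card (Cs \<sigma>)))"
      using card_pos card_le by (intro sum.group[symmetric] finB) auto
    also have "\<dots> = (\<Sum>g\<in>{1..k}. f s g * card {\<sigma>\<in>B. card (Cs \<sigma>) = g})"
      by (intro sum.cong refl) simp
    finally show ?thesis .
  qed
  have ts: "t s = (\<Sum>g\<in>{1..k}. f s g * P g)" for s
    unfolding tform grp Pform by (simp add: sum_divide_distrib)
  have k1: "k = Suc (k - 1)" using assms(1) by simp
  have split: "(\<Sum>g\<in>{1..k}. f s g * P g) = (\<Sum>g=1..k-1. P g / 2 ^ g) + f s k * P k" for s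
  proof -
    have "(\<Sum>g\<in>{1..k}. f s g * P g) = (\<Sum>g=1..k-1. f s g * P g) + f s k * P k"
      by (subst k1, subst sum.cl_ivl_Suc) (use assms(1) in simp)
    also have "(\<Sum>g=1..k-1. f s g * P g) = (\<Sum>g=1..k-1. P g / 2 ^ g)"
      by (intro sum.cong refl) (auto simp: f_def)
    finally show ?thesis .
  qed
  have t0: "t False = P k / 2 ^ (k - 1) + (\<Sum>g=1..k-1. P g / 2 ^ g)"
    unfolding ts split by (simp add: f_def)
  have t1: "t True = (\<Sum>g=1..k-1. P g / 2 ^ g)"
    unfolding ts split by (simp add: f_def)
  show ?thesis using t0 t1 by (simp add: contrast_def)
qed

end
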